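(* Let $a_1,\dots,a_n$ be real numbers with $n=k\ell$ odd (for positive integers $k,\ell$). Let $\Pi$ be the set of all partitions $\pi=\{S_1,\dots,S_\ell\}$ of $[n]$ into $\ell$ blocks each of size $k$. Then \[ \operatorname{median}_{\pi\in\Pi}\ \operatorname{median}_{b\in[\ell]}\ \operatorname{median}_{i\in S_b} a_i=\operatorname{median}_{i\in[n]} a_i . \]
   Context: The median of a finite list of odd length is its middle element after sorting; the median of a list of even length (which may occur for the outer median over $\Pi$) is the average of its two middle elements. The outer median is taken over the list of values, one for each partition $\pi\in\Pi$. *)

theory Defs
  imports Complex_Main "HOL-Library.Multiset" "HOL-Library.Disjoint_Sets"
begin

definition median_list :: "real list \<Rightarrow> real" where
  "median_list xs = (let ys = sort xs; m = length ys in
     if odd m then ys ! (m div 2)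
     else (ys ! (m div 2 - 1) + ys ! (m div 2)) / 2)"

definition median_mset :: "real multiset \<Rightarrow> real" where
  "median_mset M = median_list (sorted_list_of_multiset M)"

definition median_over :: "('b \<Rightarrow> real) \<Rightarrow> 'b set \<Rightarrow> real" where
  "median_over f A = median_mset (image_mset f (mset_set A))"

definition equipartitions :: "nat \<Rightarrow> nat \<Rightarrow> nat \<Rightarrow> nat set set set" where
  "equipartitions n k l = {P. partition_on {1..n} P \<and> card P = l \<and> (\<forall>S\<in>P. card S = k)}"

end

theory Submission
  imports Defs
begin

lemma sorted_nth_eq_m:
  fixes ys :: "real list"
  assumes s: "sorted ys" and i: "i < length ys"
    and c1: "length (filter (\<lambda>x. x < m) ys) \<le> i"
    and c2: "i + length (filter (\<lambda>x. x > m) ys) < length ys"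
  shows "ys ! i = m"
proof (rule ccontr)
  assume ne: "ys ! i \<noteq> m"
  show False
  proof (cases "ys ! i < m")
    case True
    have all: "\<forall>x\<in>set (take (Suc i) ys). x < m"
    proof
      fix x assume "x \<in> set (take (Suc i) ys)"
      then obtain j where j: "j < length (take (Suc i) ys)" "x = take (Suc i) ys ! j"
        by (metis in_set_conv_nth)
      hence "x = ys ! j" "j \<le> i" by auto
      hence "x \<le> ys ! i" using s i by (simp add: sorted_nth_mono)
      thus "x < m" using True by simp
    qed
    have "filter (\<lambda>x. x < m) (take (Suc i) ys) = take (Suc i) ys"
      using all by simp
    hence "length (filter (\<lambda>x. x < m) (take (Suc i) ys)) = Suc i" using i by simp
    moreover have "length (filter (\<lambda>x. x < m) ys) \<ge> length (filter (\<lambda>x. x < m) (take (Suc i) ys))"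
      by (metis append_take_drop_id filter_append length_append le_add1)
    ultimately show False using c1 by simp
  next
    case False
    hence gt: "ys ! i > m" using ne by simp
    have all: "\<forall>x\<in>set (drop i ys). x > m"
    proof
      fix x assume "x \<in> set (drop i ys)"
      then obtain j where j: "j < length (drop i ys)" "x = drop i ys ! j"
        by (metis in_set_conv_nth)
      hence "x = ys ! (i + j)" "i + j < length ys" using i by auto
      hence "ys ! i \<le> x" using s by (simp add: sorted_nth_mono)
      thus "x > m" using gt by simp
    qed
    have "filter (\<lambda>x. x > m) (drop i ys) = drop i ys"
      using all by simp
    hence "length (filter (\<lambda>x. x > m) (drop i ys)) = length ys - i" by simp
    moreover have "length (filter (\<lambda>x. x > m) ys) \<ge> length (filter (\<lambda>x. x > m) (drop i ys))"
      by (metis append_take_drop_id filter_append length_append le_add2)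
    ultimately show False using c2 i by simp
  qed
qed

lemma median_list_eq:
  fixes ys :: "real list"
  assumes s: "sorted ys"
    and c1: "2 * length (filter (\<lambda>x. x < m) ys) < length ys"
    and c2: "2 * length (filter (\<lambda>x. x > m) ys) < length ys"
  shows "median_list ys = m"
proof -
  have so: "sort ys = ys" using s by (simp add: sorted_sort_id)
  let ?L = "length ys"
  let ?a = "length (filter (\<lambda>x. x < m) ys)"
  let ?b = "length (filter (\<lambda>x. x > m) ys)"
  show ?thesis
  proof (cases "odd ?L")
    case True
    have "ys ! (?L div 2) = m"
      by (rule sorted_nth_eq_m[OF s]) (use True c1 c2 in presburger)+
    thus ?thesis using True so by (simp add: median_list_def Let_def)
  next
    case False
    have "ys ! (?L div 2 - 1) = m"
      by (rule sorted_nth_eq_m[OF s]) (use False c1 c2 in presburger)+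
    moreover have "ys ! (?L div 2) = m"
      by (rule sorted_nth_eq_m[OF s]) (use False c1 c2 in presburger)+
    ultimately show ?thesis using False so by (simp add: median_list_def Let_def)
  qed
qed

lemma median_over_eq:
  assumes fin: "finite A"
    and c1: "2 * card {x\<in>A. f x < m} < card A"
    and c2: "2 * card {x\<in>A. f x > m} < card A"
  shows "median_over f A = m"
proof -
  let ?M = "image_mset f (mset_set A)"
  let ?ys = "sorted_list_of_multiset ?M"
  have ms: "mset ?ys = ?M" by simp
  have len: "length ?ys = card A" by (metis ms size_mset size_image_mset size_mset_set)
  have cnt: "length (filter P ?ys) = card {x\<in>A. P (f x)}" for P
  proof -
    have "length (filter P ?ys) = size (filter_mset P (mset ?ys))"
      by (metis mset_filter size_mset)
    also have "\<dots> = size (filter_mset P ?M)" using ms by simp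
    also have "\<dots> = card {x\<in>A. P (f x)}"
      using fin by (simp add: filter_mset_image_mset filter_mset_mset_set)
    finally show ?thesis .
  qed
  have "median_list ?ys = m"
    apply (rule median_list_eq)
    using c1 c2 by (simp_all add: len cnt)
  thus ?thesis by (simp add: median_over_def median_mset_def)
qed

definition midk :: "nat set \<Rightarrow> nat" where
  "midk K = sorted_list_of_set K ! (card K div 2)"

lemma median_over_mono:
  fixes h :: "nat \<Rightarrow> real"
  assumes fin: "finite K" and od: "odd (card K)"
    and mono: "\<And>x y. x \<in> K \<Longrightarrow> y \<in> K \<Longrightarrow> x \<le> y \<Longrightarrow> h x \<le> h y"
  shows "median_over h K = h (midk K)"
proof -
  let ?L = "sorted_list_of_set K"
  have mK: "mset_set K = mset ?L"
    by (metis fin mset_set_set sorted_list_of_set.distinct_sorted_key_list_of_set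
        sorted_list_of_set.set_sorted_key_list_of_set)
  have sL: "sorted ?L" by simp
  have setL: "set ?L = K" using fin by simp
  have sm: "sorted (map h ?L)"
    unfolding sorted_iff_nth_mono
  proof (intro allI impI)
    fix i j assume ij: "i \<le> j" "j < length (map h ?L)"
    have "?L ! i \<le> ?L ! j" using sL ij by (simp add: sorted_nth_mono)
    moreover have "?L ! i \<in> K" "?L ! j \<in> K" using ij setL nth_mem by auto
    ultimately show "map h ?L ! i \<le> map h ?L ! j" using mono ij by simp
  qed
  have "image_mset h (mset_set K) = mset (map h ?L)" using mK by simp
  hence "sorted_list_of_multiset (image_mset h (mset_set K)) = map h ?L"
    using sm by (metis sorted_list_of_multiset_mset mset_map sorted_sort_id)
  moreover have "length ?L = card K" by simp
  moreover have "card K div 2 < card K" using od by (metis odd_pos div_less_dividend one_less_numeral_iff semiring_norm(76))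
  ultimately show ?thesis using od sm
    by (simp add: median_over_def median_mset_def median_list_def Let_def midk_def sorted_sort_id)
qed

lemma midk_mem: "finite K \<Longrightarrow> K \<noteq> {} \<Longrightarrow> midk K \<in> K"
  unfolding midk_def
  by (metis card_gt_0_iff div_less_dividend length_sorted_list_of_set nth_mem
      one_less_numeral_iff semiring_norm(76) sorted_list_of_set.set_sorted_key_list_of_set)

lemma partition_on_inj_image':
  assumes P: "partition_on A P" and f: "inj_on f A"
  shows "partition_on (f ` A) ((`) f ` P)"
proof -
  have "(`) f ` P - {{}} = (`) f ` P"
    using partition_onD3[OF P] by auto
  thus ?thesis using partition_on_inj_image[OF P f] by simp
qed

lemma midk_rev:
  assumes K: "K \<subseteq> {0..<n}" and od: "odd (card K)"
  shows "midk ((\<lambda>x. n - 1 - x) ` K) = n - 1 - midk K"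
proof -
  let ?t = "\<lambda>x::nat. n - 1 - x"
  have fin: "finite K" using K finite_subset by blast
  let ?L = "sorted_list_of_set K"
  let ?R = "rev (map ?t ?L)"
  have setL: "set ?L = K" using fin by simp
  have injt: "inj_on ?t K"
  proof (rule inj_onI)
    fix x y assume "x \<in> K" "y \<in> K" "?t x = ?t y"
    moreover have "x < n" "y < n" using K \<open>x \<in> K\<close> \<open>y \<in> K\<close> by auto
    ultimately show "x = y" by linarith
  qed
  have setR: "set ?R = ?t ` K" using setL by simp
  have dR: "distinct ?R" using injt setL by (simp add: distinct_map)
  have sR: "sorted ?R"
    unfolding sorted_iff_nth_mono
  proof (intro allI impI)
    fix i j assume ij: "i \<le> j" "j < length ?R"
    let ?l = "length ?L"
    have "?L ! (?l - Suc j) \<le> ?L ! (?l - Suc i)"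
      using ij by (intro sorted_nth_mono) auto
    moreover have "?L ! (?l - Suc i) < n" using K setL ij nth_mem
      by (metis atLeastLessThan_iff diff_Suc_less length_map length_rev length_greater_0_conv
          less_zeroE list.size(3) subsetD)
    ultimately show "?R ! i \<le> ?R ! j" using ij by (simp add: rev_nth)
  qed
  have sl: "sorted_list_of_set (?t ` K) = ?R"
    using sorted_list_of_set.idem_if_sorted_distinct[OF sR dR] setR by simp
  have cK: "card (?t ` K) = card K" using injt by (simp add: card_image)
  have lL: "length ?L = card K" by simp
  have pos: "card K div 2 < card K" using od
    by (metis odd_pos div_less_dividend one_less_numeral_iff semiring_norm(76))
  have idx: "card K - Suc (card K div 2) = card K div 2" using od by presburger
  show ?thesis unfolding midk_def sl cK using pos idx lL by (simp add: rev_nth)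
qed

locale msetup =
  fixes n :: nat and a :: "nat \<Rightarrow> real" and f :: "nat \<Rightarrow> nat" and h :: "nat \<Rightarrow> real"
  assumes bij: "bij_betw f {1..n} {0..<n}"
    and ah: "\<And>x. x \<in> {1..n} \<Longrightarrow> a x = h (f x)"
    and hmono: "\<And>x y. x \<le> y \<Longrightarrow> y < n \<Longrightarrow> h x \<le> h y"
begin

definition g where "g = inv_into {1..n} f"

lemma g_f: "x \<in> {1..n} \<Longrightarrow> g (f x) = x"
  unfolding g_def using bij by (simp add: bij_betw_def)
lemma f_g: "y < n \<Longrightarrow> f (g y) = y"
  unfolding g_def using bij by (simp add: bij_betw_inv_into_right)
lemma g_in: "y < n \<Longrightarrow> g y \<in> {1..n}"
  unfolding g_def using bij by (metis atLeastLessThan_iff bij_betw_def inv_into_into zero_le)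
lemma f_in: "x \<in> {1..n} \<Longrightarrow> f x < n"
  using bij by (auto simp: bij_betw_def)
lemma inj_f: "inj_on f {1..n}" using bij by (simp add: bij_betw_def)
lemma inj_g: "inj_on g {0..<n}" by (metis atLeastLessThan_iff f_g inj_onI)
lemma f_image: "f ` {1..n} = {0..<n}" using bij by (simp add: bij_betw_def)

definition mid where "mid S = g (midk (f ` S))"

definition sig where "sig x = g (n - 1 - f x)"

lemma sig_in: "x \<in> {1..n} \<Longrightarrow> sig x \<in> {1..n}"
proof -
  assume x: "x \<in> {1..n}"
  hence "f x < n" by (rule f_in)
  hence "n - 1 - f x < n" by linarith
  thus ?thesis unfolding sig_def by (rule g_in)
qed
lemma f_sig: "x \<in> {1..n} \<Longrightarrow> f (sig x) = n - 1 - f x"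
proof -
  assume x: "x \<in> {1..n}"
  hence "f x < n" by (rule f_in)
  hence "n - 1 - f x < n" by linarith
  thus ?thesis unfolding sig_def by (rule f_g)
qed
lemma sig_sig: "x \<in> {1..n} \<Longrightarrow> sig (sig x) = x"
proof -
  assume x: "x \<in> {1..n}"
  have "f (sig (sig x)) = f x" using x f_sig sig_in f_in by fastforce
  thus ?thesis using x sig_in inj_f by (meson inj_onD)
qed
lemma sig_image: "sig ` {1..n} = {1..n}"
proof
  show "sig ` {1..n} \<subseteq> {1..n}" using sig_in by blast
  show "{1..n} \<subseteq> sig ` {1..n}"
  proof
    fix x assume x: "x \<in> {1..n}"
    hence "x = sig (sig x)" by (simp add: sig_sig)
    thus "x \<in> sig ` {1..n}" using sig_in x by blast
  qed
qed
lemma inj_sig: "inj_on sig {1..n}"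
  by (rule inj_onI) (metis sig_sig)
lemma sig_sig_set: "S \<subseteq> {1..n} \<Longrightarrow> sig ` sig ` S = S"
proof -
  assume S: "S \<subseteq> {1..n}"
  have "sig ` sig ` S = (sig \<circ> sig) ` S" by (simp add: image_comp)
  also have "\<dots> = id ` S" using S sig_sig by (intro image_cong) auto
  finally show ?thesis by simp
qed

lemma med_block:
  assumes S: "S \<subseteq> {1..n}" and od: "odd (card S)"
  shows "median_over a S = a (mid S) \<and> mid S \<in> S"
proof -
  have fin: "finite S" using S finite_subset by blast
  have injS: "inj_on f S" using inj_f S inj_on_subset by blast
  have fS: "f ` S \<subseteq> {0..<n}" using S f_image by blast
  have cS: "card (f ` S) = card S" using injS card_image by blast
  have "image_mset a (mset_set S) = image_mset (h \<circ> f) (mset_set S)"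
    using S fin by (intro image_mset_cong) (auto simp: ah)
  also have "\<dots> = image_mset h (mset_set (f ` S))"
    by (simp add: image_mset_mset_set[OF injS, symmetric] multiset.map_comp)
  finally have "median_over a S = median_over h (f ` S)" by (simp add: median_over_def)
  also have "\<dots> = h (midk (f ` S))"
    using fS od cS fin by (intro median_over_mono) (auto intro!: hmono)
  finally have e: "median_over a S = h (midk (f ` S))" .
  have ne: "S \<noteq> {}" using od by auto
  have mk: "midk (f ` S) \<in> f ` S" using fin ne by (intro midk_mem) auto
  then obtain x where x: "x \<in> S" "midk (f ` S) = f x" by blast
  have "mid S = x" unfolding mid_def using x S g_f by auto
  thus ?thesis using e x S ah by auto
qed

lemma mid_sig:
  assumes S: "S \<subseteq> {1..n}" and od: "odd (card S)"
  shows "mid (sig ` S) = sig (mid S)"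
proof -
  have fS: "f ` S \<subseteq> {0..<n}" using S f_image by blast
  have cS: "card (f ` S) = card S" using inj_f S inj_on_subset card_image by blast
  have "f ` sig ` S = (f \<circ> sig) ` S" by (simp add: image_comp)
  also have "\<dots> = ((\<lambda>x. n - 1 - x) \<circ> f) ` S" using S f_sig by (intro image_cong) auto
  finally have "f ` sig ` S = (\<lambda>x. n - 1 - x) ` (f ` S)" by (simp add: image_comp)
  hence "mid (sig ` S) = g (n - 1 - midk (f ` S))"
    unfolding mid_def using midk_rev[OF fS] od cS by simp
  moreover have "midk (f ` S) \<in> f ` S"
    using od S by (intro midk_mem) (auto intro: finite_subset)
  hence "midk (f ` S) < n" using fS by auto
  ultimately show ?thesis unfolding mid_def sig_def by (simp add: f_g)
qed

end

locale msetup2 = msetup +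
  fixes k l :: nat
  assumes nkl: "n = k * l" and oddn: "odd n"
begin

lemma oddk: "odd k" using nkl oddn by simp
lemma oddl: "odd l" using nkl oddn by simp

abbreviation "E \<equiv> equipartitions n k l"

lemma E_block: "P \<in> E \<Longrightarrow> S \<in> P \<Longrightarrow> S \<subseteq> {1..n} \<and> card S = k"
  unfolding equipartitions_def partition_on_def by auto

lemma E_card: "P \<in> E \<Longrightarrow> card P = l"
  unfolding equipartitions_def by auto

lemma E_fin: "finite E"
proof -
  have "E \<subseteq> Pow (Pow {1..n})"
    unfolding equipartitions_def partition_on_def by auto
  thus ?thesis by (rule finite_subset) simp
qed

definition J where "J P = mid (mid ` P)"

lemma mid_mem: "P \<in> E \<Longrightarrow> S \<in> P \<Longrightarrow> mid S \<in> S \<and> median_over a S = a (mid S)"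
proof -
  assume P: "P \<in> E" and S: "S \<in> P"
  have "S \<subseteq> {1..n}" "odd (card S)" using E_block[OF P S] oddk by auto
  from med_block[OF this] show ?thesis by simp
qed

lemma inj_mid: assumes P: "P \<in> E" shows "inj_on mid P"
proof (rule inj_onI)
  fix S T assume S: "S \<in> P" and T: "T \<in> P" and eq: "mid S = mid T"
  have m1: "mid S \<in> S" using mid_mem[OF P S] by (rule conjunct1)
  have m2: "mid S \<in> T" using mid_mem[OF P T] eq by simp
  have d: "disjoint P" using P unfolding equipartitions_def by (auto dest: partition_onD2)
  show "S = T"
  proof (rule ccontr)
    assume "S \<noteq> T"
    hence "S \<inter> T = {}" by (rule disjointD[OF d S T])
    thus False using m1 m2 by (simp add: disjoint_iff)
  qed
qed

lemma mid_image: "P \<in> E \<Longrightarrow> mid ` P \<subseteq> {1..n} \<and> card (mid ` P) = l"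
proof -
  assume P: "P \<in> E"
  have "mid ` P \<subseteq> {1..n}"
  proof
    fix x assume "x \<in> mid ` P"
    then obtain S where S: "S \<in> P" "x = mid S" by blast
    thus "x \<in> {1..n}" using mid_mem[OF P S(1)] E_block[OF P S(1)] by auto
  qed
  moreover have "card (mid ` P) = card P" using inj_mid[OF P] by (rule card_image)
  hence "card (mid ` P) = l" using E_card[OF P] by simp
  ultimately show ?thesis by simp
qed

lemma MP: "P \<in> E \<Longrightarrow> median_over (\<lambda>S. median_over a S) P = a (J P) \<and> J P \<in> {1..n}"
proof -
  assume P: "P \<in> E"
  have "image_mset (\<lambda>S. median_over a S) (mset_set P) = image_mset (a \<circ> mid) (mset_set P)"
  proof (rule image_mset_cong)
    fix S assume "S \<in># mset_set P"
    hence "S \<in> P" by (cases "finite P") auto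
    thus "median_over a S = (a \<circ> mid) S" using mid_mem[OF P] by simp
  qed
  also have "\<dots> = image_mset a (mset_set (mid ` P))"
    by (simp add: image_mset_mset_set[OF inj_mid[OF P], symmetric] multiset.map_comp)
  finally have "median_over (\<lambda>S. median_over a S) P = median_over a (mid ` P)"
    by (simp add: median_over_def)
  thus ?thesis using med_block[of "mid ` P"] mid_image[OF P] oddl unfolding J_def by auto
qed

definition Phi where "Phi P = (`) sig ` P"

lemma Phi_E: "P \<in> E \<Longrightarrow> Phi P \<in> E"
proof -
  assume P: "P \<in> E"
  have po: "partition_on {1..n} P" using P unfolding equipartitions_def by auto
  have "partition_on (sig ` {1..n}) (Phi P)"
    unfolding Phi_def by (rule partition_on_inj_image'[OF po inj_sig])
  hence po': "partition_on {1..n} (Phi P)" unfolding sig_image .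
  have "P \<subseteq> Pow {1..n}" using E_block[OF P] by auto
  hence "inj_on ((`) sig) P" using inj_on_image_Pow[OF inj_sig] inj_on_subset by blast
  hence "card (Phi P) = card P" unfolding Phi_def by (rule card_image)
  hence "card (Phi P) = l" using E_card[OF P] by simp
  moreover have "\<forall>S\<in>Phi P. card S = k"
  proof
    fix T assume "T \<in> Phi P"
    then obtain S where S: "S \<in> P" "T = sig ` S" unfolding Phi_def by blast
    have "inj_on sig S" using E_block[OF P S(1)] inj_sig inj_on_subset by blast
    hence "card (sig ` S) = card S" by (rule card_image)
    thus "card T = k" using S E_block[OF P S(1)] by simp
  qed
  ultimately show ?thesis using po' unfolding equipartitions_def by auto
qed

lemma Phi_Phi: "P \<in> E \<Longrightarrow> Phi (Phi P) = P"
proof -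
  assume P: "P \<in> E"
  have "Phi (Phi P) = ((`) sig \<circ> (`) sig) ` P" unfolding Phi_def by (simp add: image_comp)
  also have "\<dots> = id ` P" using E_block[OF P] sig_sig_set by (intro image_cong) auto
  finally show ?thesis by simp
qed

lemma J_Phi: "P \<in> E \<Longrightarrow> J (Phi P) = sig (J P)"
proof -
  assume P: "P \<in> E"
  have "mid ` Phi P = (mid \<circ> (`) sig) ` P" unfolding Phi_def by (simp add: image_comp)
  also have "\<dots> = (sig \<circ> mid) ` P"
  proof (rule image_cong)
    fix S assume S: "S \<in> P"
    have "S \<subseteq> {1..n}" "odd (card S)" using E_block[OF P S] oddk by auto
    thus "(mid \<circ> (`) sig) S = (sig \<circ> mid) S" using mid_sig by simp
  qed simp
  finally have "mid ` Phi P = sig ` (mid ` P)" by (simp add: image_comp)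
  thus ?thesis unfolding J_def using mid_sig mid_image[OF P] oddl by simp
qed

end

context msetup2
begin

lemma kpos: "k > 0" using oddk by (cases k) auto

lemma exP0: "\<exists>P\<in>E. f (J P) = n div 2"
proof -
  define K where "K t = {t*k..<t*k+k}" for t
  define psi where "psi t = t*k + k div 2" for t
  have Kdiv: "x \<in> K t \<longleftrightarrow> x div k = t" for x t
  proof -
    have "x div k = t \<longleftrightarrow> \<not> (x div k < t) \<and> x div k < Suc t" by auto
    also have "\<dots> \<longleftrightarrow> \<not> (x < t * k) \<and> x < Suc t * k"
      using kpos by (simp only: div_less_iff_less_mult)
    also have "\<dots> \<longleftrightarrow> t * k \<le> x \<and> x < t * k + k" by auto
    finally show ?thesis unfolding K_def by auto
  qed
  have Kn: "K t \<subseteq> {0..<n}" if "t < l" for t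
  proof
    fix x assume "x \<in> K t"
    hence "x div k < l" using Kdiv that by simp
    hence "x < l * k" using kpos by (simp add: div_less_iff_less_mult)
    thus "x \<in> {0..<n}" using nkl by (simp add: mult.commute)
  qed
  have UK: "\<Union>(K ` {0..<l}) = {0..<n}"
  proof
    show "\<Union>(K ` {0..<l}) \<subseteq> {0..<n}" using Kn by fastforce
    show "{0..<n} \<subseteq> \<Union>(K ` {0..<l})"
    proof
      fix x assume "x \<in> {0..<n}"
      hence "x < l * k" using nkl by (simp add: mult.commute)
      hence "x div k < l" using kpos by (simp add: div_less_iff_less_mult)
      moreover have "x \<in> K (x div k)" using Kdiv by simp
      ultimately show "x \<in> \<Union>(K ` {0..<l})" by auto
    qed
  qed
  have tK: "t * k \<in> K t" for t using kpos unfolding K_def by simp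
  have injK: "inj_on K {0..<l}"
  proof (rule inj_onI)
    fix s t assume "K s = K t"
    hence "s * k \<in> K t" using tK[of s] by simp
    hence "(s * k) div k = t" using Kdiv by simp
    thus "s = t" using kpos by simp
  qed
  have poK: "partition_on {0..<n} (K ` {0..<l})"
  proof (rule partition_onI)
    show "\<Union>(K ` {0..<l}) = {0..<n}" by (rule UK)
    show "{} \<notin> K ` {0..<l}" using tK by auto
    fix p q assume "p \<in> K ` {0..<l}" "q \<in> K ` {0..<l}" "p \<noteq> q"
    then obtain s t where "p = K s" "q = K t" "s \<noteq> t" by auto
    thus "disjnt p q" using Kdiv by (auto simp: disjnt_def)
  qed
  define P0 where "P0 = (`) g ` (K ` {0..<l})"
  have gimg: "g ` {0..<n} = {1..n}"
  proof -
    have "g ` {0..<n} = g ` f ` {1..n}" unfolding f_image ..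
    also have "\<dots> = (g \<circ> f) ` {1..n}" by (simp add: image_comp)
    also have "\<dots> = id ` {1..n}" by (rule image_cong) (auto simp: g_f)
    finally show ?thesis by simp
  qed
  have poP: "partition_on {1..n} P0"
    using partition_on_inj_image'[OF poK inj_g] unfolding P0_def gimg .
  have injgK: "inj_on ((`) g) (K ` {0..<l})"
  proof -
    have "K ` {0..<l} \<subseteq> Pow {0..<n}" using Kn by fastforce
    thus ?thesis using inj_on_image_Pow[OF inj_g] inj_on_subset by blast
  qed
  have cP: "card P0 = l"
  proof -
    have "card P0 = card (K ` {0..<l})" unfolding P0_def by (rule card_image[OF injgK])
    also have "\<dots> = l" using card_image[OF injK] by simp
    finally show ?thesis .
  qed
  have cK: "card (K t) = k" for t unfolding K_def by simp
  have fgK: "f ` g ` K t = K t" if "t < l" for t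
  proof -
    have "f ` g ` K t = (f \<circ> g) ` K t" by (simp add: image_comp)
    also have "\<dots> = id ` K t" using Kn[OF that] by (intro image_cong) (auto simp: f_g)
    finally show ?thesis by simp
  qed
  have cB: "\<forall>S\<in>P0. card S = k"
  proof
    fix S assume "S \<in> P0"
    then obtain t where t: "t < l" "S = g ` K t" unfolding P0_def by auto
    have "inj_on g (K t)" using inj_g Kn[OF t(1)] inj_on_subset by blast
    thus "card S = k" using t cK card_image by metis
  qed
  have P0E: "P0 \<in> E" unfolding equipartitions_def using poP cP cB by simp
  have midB: "mid (g ` K t) = g (psi t)" if "t < l" for t
  proof -
    have "midk (K t) = psi t"
      unfolding midk_def K_def psi_def using kpos by simp
    thus ?thesis unfolding mid_def fgK[OF that] by simp
  qed
  have psin: "psi t < n" if "t < l" for t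
  proof -
    have "psi t \<in> K t" unfolding K_def psi_def using kpos by simp
    thus ?thesis using Kn[OF that] by auto
  qed
  have "mid ` P0 = (\<lambda>t. g (psi t)) ` {0..<l}"
    unfolding P0_def image_comp by (rule image_cong) (auto simp: midB)
  hence fmP: "f ` mid ` P0 = psi ` {0..<l}"
    by (auto simp: image_comp f_g psin intro!: image_cong)
  have sps: "sorted (map psi [0..<l])"
    unfolding sorted_iff_nth_mono psi_def by simp
  have dps: "distinct (map psi [0..<l])"
    using kpos by (simp add: distinct_map inj_on_def psi_def)
  have sl: "sorted_list_of_set (psi ` {0..<l}) = map psi [0..<l]"
    using sorted_list_of_set.idem_if_sorted_distinct[OF sps dps] by simp
  have cps: "card (psi ` {0..<l}) = l"
    using distinct_card[OF dps] by simp
  have l2: "l div 2 < l" using oddl by (cases l) auto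
  have mk: "midk (psi ` {0..<l}) = psi (l div 2)"
    unfolding midk_def sl cps using l2 by simp
  have "f (J P0) = psi (l div 2)"
    unfolding J_def mid_def fmP mk using f_g psin[OF l2] by simp
  also have "\<dots> = n div 2"
  proof -
    obtain p where p: "l = 2 * p + 1" using oddl oddE by blast
    have "n = 2 * (p * k) + k" using nkl p by (simp add: algebra_simps)
    hence "n div 2 = p * k + k div 2" by simp
    thus ?thesis unfolding psi_def using p by simp
  qed
  finally show ?thesis using P0E by blast
qed

end

context msetup2
begin

lemma main: "median_over (\<lambda>P. median_over (\<lambda>S. median_over a S) P) E = median_over a {1..n}"
proof -
  define c where "c = n div 2"
  have n2: "n = 2 * c + 1" using oddn unfolding c_def by presburger
  have cn: "c < n" using n2 by simp
  have m: "median_over a {1..n} = h c"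
  proof -
    have "median_over a {1..n} = a (mid {1..n})" using med_block[of "{1..n}"] oddn by simp
    moreover have "mid {1..n} = g c" unfolding mid_def f_image midk_def c_def
      using cn c_def by simp
    ultimately show ?thesis using ah g_in[OF cn] f_g[OF cn] by simp
  qed
  define Mv where "Mv P = median_over (\<lambda>S. median_over a S) P" for P
  define A where "A = {P\<in>E. f (J P) > c}"
  define B where "B = {P\<in>E. f (J P) < c}"
  have fJ: "P \<in> E \<Longrightarrow> f (J P) < n \<and> Mv P = h (f (J P))" for P
    using MP[of P] f_in ah unfolding Mv_def by auto
  have sub1: "{P\<in>E. Mv P < h c} \<subseteq> B"
  proof
    fix P assume P: "P \<in> {P\<in>E. Mv P < h c}"
    hence "P \<in> E" "Mv P < h c" by auto
    moreover have "\<not> f (J P) \<ge> c"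
    proof
      assume "f (J P) \<ge> c"
      moreover have "f (J P) < n" using fJ[OF \<open>P \<in> E\<close>] by (rule conjunct1)
      ultimately have "h c \<le> h (f (J P))" by (rule hmono)
      thus False using fJ[OF \<open>P \<in> E\<close>] \<open>Mv P < h c\<close> by simp
    qed
    ultimately show "P \<in> B" unfolding B_def by simp
  qed
  have sub2: "{P\<in>E. Mv P > h c} \<subseteq> A"
  proof
    fix P assume P: "P \<in> {P\<in>E. Mv P > h c}"
    hence "P \<in> E" "Mv P > h c" by auto
    moreover have "\<not> f (J P) \<le> c"
    proof
      assume "f (J P) \<le> c"
      hence "h (f (J P)) \<le> h c" using cn by (rule hmono)
      thus False using fJ[OF \<open>P \<in> E\<close>] \<open>Mv P > h c\<close> by simp
    qed
    ultimately show "P \<in> A" unfolding A_def by simp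
  qed
  have fJPhi: "P \<in> E \<Longrightarrow> f (J (Phi P)) = n - 1 - f (J P)" for P
    using J_Phi MP f_sig by simp
  have injPhi: "inj_on Phi X" if "X \<subseteq> E" for X
  proof (rule inj_onI)
    fix P Q assume "P \<in> X" "Q \<in> X" "Phi P = Phi Q"
    hence "Phi (Phi P) = Phi (Phi Q)" by simp
    thus "P = Q" using Phi_Phi \<open>P \<in> X\<close> \<open>Q \<in> X\<close> that by (metis subsetD)
  qed
  have finA: "finite A" "finite B" unfolding A_def B_def using E_fin by auto
  have AE: "A \<subseteq> E" "B \<subseteq> E" unfolding A_def B_def by auto
  have PAB: "Phi ` A \<subseteq> B"
  proof
    fix Q assume "Q \<in> Phi ` A"
    then obtain P where P: "P \<in> A" "Q = Phi P" by blast
    hence "P \<in> E" "f (J P) > c" unfolding A_def by auto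
    have "f (J P) < n" using fJ \<open>P \<in> E\<close> by blast
    moreover have "f (J Q) = n - 1 - f (J P)" using fJPhi[OF \<open>P \<in> E\<close>] P(2) by simp
    ultimately have "f (J Q) < c" using n2 \<open>f (J P) > c\<close> by linarith
    thus "Q \<in> B" unfolding B_def using P(2) Phi_E[OF \<open>P \<in> E\<close>] by simp
  qed
  have AB: "card A \<le> card B"
    by (rule card_inj_on_le[OF injPhi[OF AE(1)] PAB finA(2)])
  have PBA: "Phi ` B \<subseteq> A"
  proof
    fix Q assume "Q \<in> Phi ` B"
    then obtain P where P: "P \<in> B" "Q = Phi P" by blast
    hence "P \<in> E" "f (J P) < c" unfolding B_def by auto
    have "f (J Q) = n - 1 - f (J P)" using fJPhi[OF \<open>P \<in> E\<close>] P(2) by simp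
    hence "f (J Q) > c" using n2 \<open>f (J P) < c\<close> by linarith
    thus "Q \<in> A" unfolding A_def using P(2) Phi_E[OF \<open>P \<in> E\<close>] by simp
  qed
  have BA: "card B \<le> card A"
    by (rule card_inj_on_le[OF injPhi[OF AE(2)] PBA finA(1)])
  obtain P0 where P0: "P0 \<in> E" "f (J P0) = c" using exP0 c_def by blast
  have "A \<union> B \<union> {P0} \<subseteq> E" using P0 unfolding A_def B_def by auto
  hence "card (A \<union> B \<union> {P0}) \<le> card E" using E_fin card_mono by blast
  moreover have "card (A \<union> B \<union> {P0}) = card A + card B + 1"
  proof -
    have "A \<inter> B = {}" unfolding A_def B_def by auto
    moreover have "P0 \<notin> A \<union> B" using P0 unfolding A_def B_def by auto
    ultimately show ?thesis using finA by (simp add: card_Un_disjoint)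
  qed
  ultimately have cE: "card A + card B + 1 \<le> card E" by simp
  have c1: "card {P\<in>E. Mv P < h c} \<le> card B" using sub1 finA card_mono by blast
  have c2: "card {P\<in>E. Mv P > h c} \<le> card A" using sub2 finA card_mono by blast
  have "median_over Mv E = h c"
    by (rule median_over_eq[OF E_fin]) (use c1 c2 AB BA cE in linarith)+
  thus ?thesis using m unfolding Mv_def by simp
qed

end

lemma exists_rank:
  fixes a :: "nat \<Rightarrow> real" and n :: nat
  shows "\<exists>f h. bij_betw f {1..n} {0..<n} \<and> (\<forall>x\<in>{1..n}. a x = h (f x))
           \<and> (\<forall>x y. x \<le> y \<longrightarrow> y < n \<longrightarrow> h x \<le> h y)"
proof -
  define R where "R j i \<longleftrightarrow> a j < a i \<or> (a j = a i \<and> j < i)" for j i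
  define f where "f i = card {j\<in>{1..n}. R j i}" for i
  have Rtrans: "R x y \<Longrightarrow> R y z \<Longrightarrow> R x z" for x y z unfolding R_def by auto
  have Rirr: "\<not> R x x" for x unfolding R_def by auto
  have Rtot: "x \<noteq> y \<Longrightarrow> R x y \<or> R y x" for x y unfolding R_def by auto
  have Rlt: "f j < f i" if Rji: "R j i" and j: "j \<in> {1..n}" for i j
  proof -
    have "{x\<in>{1..n}. R x j} \<subset> {x\<in>{1..n}. R x i}"
    proof
      show "{x\<in>{1..n}. R x j} \<subseteq> {x\<in>{1..n}. R x i}" using Rtrans Rji by blast
      have "j \<in> {x\<in>{1..n}. R x i}" using j Rji by simp
      moreover have "j \<notin> {x\<in>{1..n}. R x j}" using Rirr by simp
      ultimately show "{x\<in>{1..n}. R x j} \<noteq> {x\<in>{1..n}. R x i}" by blast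
    qed
    thus "f j < f i" unfolding f_def by (intro psubset_card_mono) auto
  qed
  have fin: "f i < n" if i: "i \<in> {1..n}" for i
  proof -
    have "{j\<in>{1..n}. R j i} \<subseteq> {1..n} - {i}" using Rirr by auto
    hence "f i \<le> card ({1..n} - {i})" unfolding f_def by (intro card_mono) auto
    also have "\<dots> = n - 1" using i by simp
    finally show ?thesis using i by auto
  qed
  have inj: "inj_on f {1..n}"
  proof (rule inj_onI)
    fix x y assume x: "x \<in> {1..n}" and y: "y \<in> {1..n}" and e: "f x = f y"
    show "x = y"
    proof (rule ccontr)
      assume "x \<noteq> y"
      hence "R x y \<or> R y x" by (rule Rtot)
      thus False using Rlt x y e by (metis less_irrefl)
    qed
  qed
  have img: "f ` {1..n} = {0..<n}"
  proof (rule card_subset_eq)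
    show "finite {0..<n}" by simp
    show "f ` {1..n} \<subseteq> {0..<n}" using fin by auto
    show "card (f ` {1..n}) = card {0..<n}" using card_image[OF inj] by simp
  qed
  have bij: "bij_betw f {1..n} {0..<n}" using inj img by (simp add: bij_betw_def)
  define g where "g = inv_into {1..n} f"
  define h where "h y = a (g y)" for y
  have ah: "\<forall>x\<in>{1..n}. a x = h (f x)"
    unfolding h_def g_def using inj by (simp add: inv_into_f_f)
  have gin: "y < n \<Longrightarrow> g y \<in> {1..n}" for y
    unfolding g_def using img by (metis atLeastLessThan_iff inv_into_into zero_le)
  have fg: "y < n \<Longrightarrow> f (g y) = y" for y
    unfolding g_def using img by (metis atLeastLessThan_iff f_inv_into_f zero_le)
  have mono: "\<forall>x y. x \<le> y \<longrightarrow> y < n \<longrightarrow> h x \<le> h y"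
  proof (intro allI impI)
    fix x y assume xy: "x \<le> y" "y < n"
    show "h x \<le> h y"
    proof (rule ccontr)
      assume "\<not> h x \<le> h y"
      hence "a (g y) < a (g x)" unfolding h_def by simp
      hence "R (g y) (g x)" unfolding R_def by simp
      hence "f (g y) < f (g x)" using Rlt gin xy by simp
      thus False using fg xy by simp
    qed
  qed
  show ?thesis using bij ah mono by blast
qed

theorem lemma6p4:
  fixes a :: "nat \<Rightarrow> real" and n k l :: nat
  assumes "k > 0" and "l > 0" and "n = k * l" and "odd n"
  shows "median_over (\<lambda>P. median_over (\<lambda>S. median_over a S) P) (equipartitions n k l)
         = median_over a {1..n}"
proof -
  obtain f h where fh: "bij_betw f {1..n} {0..<n}" "\<forall>x\<in>{1..n}. a x = h (f x)"
    "\<forall>x y. x \<le> y \<longrightarrow> y < n \<longrightarrow> h x \<le> h y"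
    using exists_rank[of n a] by blast
  interpret msetup2 n a f h k l
  proof
    show "bij_betw f {1..n} {0..<n}" by (rule fh(1))
    show "\<And>x. x \<in> {1..n} \<Longrightarrow> a x = h (f x)" using fh(2) by blast
    show "\<And>x y. x \<le> y \<Longrightarrow> y < n \<Longrightarrow> h x \<le> h y" using fh(3) by blast
    show "n = k * l" by (rule assms(3))
    show "odd n" by (rule assms(4))
  qed
  show ?thesis by (rule main)
qed

end
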